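(* Let $$\mathrm{V}(\ell,u)=\frac12\int_\ell^{\pi/2}\mathrm{Im}\,\log\frac{1-i\sqrt{u^2/\sin^2\sigma-1}}{1+i\sqrt{u^2/\sin^2\sigma-1}}\,\mathrm{d}\sigma,\qquad \ell\in\mathbb{R},\ u\in\mathbb{R}\setminus\{0\}.$$ Then: (i) $\mathrm{V}$ is continuous and almost everywhere differentiable on its domain; and for all $\ell\in\mathbb{R}$, $u\neq 0$: (ii) $\mathrm{V}(\ell,u)=\mathrm{V}(\ell,-u)$; (iii) $\mathrm{V}(\pi-\ell,u)=-\mathrm{V}(\ell,u)$; (iv) $\mathrm{V}(\ell,u)+\mathrm{V}(-\ell,u)=2\,\mathrm{V}(0,u)$; (v) $\mathrm{V}(\ell+k\pi,u)=\mathrm{V}(\ell,u)-2k\,\mathrm{V}(0,u)$ for all $k\in\mathbb{Z}$.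
   Context: The square root is the principal one ($\sqrt{x}=i\sqrt{|x|}$ for $x<0$) and $\log$ is the principal logarithm with branch cut along $(-\infty,0]$ (imaginary part in $(-\pi,\pi]$). The integrand is defined for $\sin\sigma\neq0$, i.e. almost everywhere. *)

theory Defs
  imports "HOL-Analysis.Analysis"
begin

definition Vintegrand :: "real \<Rightarrow> real \<Rightarrow> real" where
  "Vintegrand u \<sigma> =
     (let s = csqrt (complex_of_real (u\<^sup>2 / (sin \<sigma>)\<^sup>2 - 1))
      in Im (Ln ((1 - \<i> * s) / (1 + \<i> * s))))"

definition V :: "real \<Rightarrow> real \<Rightarrow> real" where
  "V l u = (1/2) * (LBINT \<sigma>=l..pi/2. Vintegrand u \<sigma>)"

end

theory Submission
  imports Defs
begin


definition phi :: "real \<Rightarrow> real \<Rightarrow> real" where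
  "phi a s = arccos (min 1 (\<bar>sin s\<bar> / a))"

lemma Im_Ln_real_case:
  fixes t :: real
  shows "Im (Ln ((1 - \<i> * complex_of_real t) / (1 + \<i> * complex_of_real t))) = - 2 * arctan t"
proof -
  have "Arctan (complex_of_real t) = (\<i>/2) * Ln((1 - \<i>*t) / (1 + \<i>*t))"
    by (simp add: Arctan_def)
  hence "Ln((1 - \<i>*t) / (1 + \<i>*t)) = -2 * \<i> * complex_of_real (arctan t)"
    by (simp add: Arctan_of_real[symmetric] field_simps)
  thus ?thesis by simp
qed

lemma arctan_eq_arccos:
  assumes "0 < x" "x \<le> a"
  shows "arctan (sqrt (a\<^sup>2 / x\<^sup>2 - 1)) = arccos (x / a)"
proof -
  have a: "a > 0" using assms by simp
  have ge: "a\<^sup>2 / x\<^sup>2 \<ge> 1" using assms by (simp add: power_mono)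
  have "1 + (sqrt (a\<^sup>2 / x\<^sup>2 - 1))\<^sup>2 = a\<^sup>2/x\<^sup>2"
    using ge by simp
  hence "cos (arctan (sqrt (a\<^sup>2 / x\<^sup>2 - 1))) = x / a"
    using assms a by (simp add: cos_arctan real_sqrt_divide)
  moreover have "0 \<le> arctan (sqrt (a\<^sup>2 / x\<^sup>2 - 1))" "arctan (sqrt (a\<^sup>2 / x\<^sup>2 - 1)) \<le> pi"
  proof -
    show "0 \<le> arctan (sqrt (a\<^sup>2 / x\<^sup>2 - 1))"
      using arctan_monotone'[of 0 "sqrt (a\<^sup>2 / x\<^sup>2 - 1)"] ge by simp
    show "arctan (sqrt (a\<^sup>2 / x\<^sup>2 - 1)) \<le> pi"
      using arctan_ubound[of "sqrt (a\<^sup>2 / x\<^sup>2 - 1)"] pi_gt_zero by linarith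
  qed
  ultimately show ?thesis by (metis arccos_cos)
qed

lemma integrand_eq:
  assumes "u \<noteq> 0" "sin s \<noteq> 0"
  shows "Vintegrand u s = - 2 * phi \<bar>u\<bar> s"
proof -
  define x where "x = \<bar>sin s\<bar>"
  define a where "a = \<bar>u\<bar>"
  have x: "x > 0" and a: "a > 0" using assms by (auto simp: x_def a_def)
  have w: "u\<^sup>2 / (sin s)\<^sup>2 - 1 = a\<^sup>2 / x\<^sup>2 - 1" by (simp add: x_def a_def)
  show ?thesis
  proof (cases "x \<le> a")
    case True
    hence "a\<^sup>2 / x\<^sup>2 - 1 \<ge> 0" using x by (simp add: power_mono)
    hence "Vintegrand u s = - 2 * arctan (sqrt (a\<^sup>2 / x\<^sup>2 - 1))"
      unfolding Vintegrand_def Let_def w by (simp add: csqrt_of_real Im_Ln_real_case)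
    also have "\<dots> = -2 * arccos (x / a)" using arctan_eq_arccos[OF x True] by simp
    finally show ?thesis using True x a by (simp add: phi_def x_def a_def)
  next
    case False
    define r where "r = sqrt (1 - a\<^sup>2 / x\<^sup>2)"
    have lt: "a\<^sup>2 / x\<^sup>2 < 1" using False x a by (simp add: power_strict_mono)
    have r0: "0 < r" using lt a x by (simp add: r_def)
    have r1: "r < 1" using a x by (simp add: r_def)
    have "csqrt (complex_of_real (a\<^sup>2 / x\<^sup>2 - 1)) = \<i> * r"
      using lt by (simp add: csqrt_of_real' r_def)
    hence "Vintegrand u s = Im (Ln ((1 + r) / (1 - r)))"
      unfolding Vintegrand_def Let_def w by simp
    also have "\<dots> = 0"
    proof -
      have pos: "(1+r)/(1-r) > 0" using r0 r1 by simp
      show ?thesis by (simp only: Ln_of_real[OF pos] Im_complex_of_real)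
    qed
    moreover have "min 1 (x/a) = 1" using False a by simp
    ultimately show ?thesis by (simp add: phi_def x_def a_def)
  qed
qed



lemma phi_cont2: "continuous_on ({0<..} \<times> UNIV) (\<lambda>(a,s). phi a s)"
  unfolding phi_def split_beta
  by (intro continuous_intros) (auto simp: divide_simps)

lemma phi_cont: "a > 0 \<Longrightarrow> continuous_on UNIV (phi a)"
  unfolding phi_def
  by (intro continuous_intros) (auto simp: divide_simps)

lemma phi_isCont: "a > 0 \<Longrightarrow> isCont (phi a) x"
  using phi_cont continuous_on_eq_continuous_at by blast

lemma phi_minus: "phi a (- s) = phi a s" by (simp add: phi_def)
lemma phi_pi_minus: "phi a (pi - s) = phi a s" by (simp add: phi_def)
lemma phi_plus_pi: "phi a (s + pi) = phi a s" by (simp add: phi_def)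

definition Phi :: "real \<Rightarrow> real \<Rightarrow> real" where
  "Phi l a = (LBINT s=(0::real)..l. phi a s)"

lemma phi_integrable: fixes x y :: real shows "a > 0 \<Longrightarrow> interval_lebesgue_integrable lborel x y (phi a)"
  by (rule interval_integrable_isCont) (simp add: phi_isCont)

lemma countable_sin0: "countable {s::real. sin s = 0}"
proof -
  have "{s::real. sin s = 0} \<subseteq> range (\<lambda>i::int. of_int i * pi)"
    by (auto simp: sin_zero_iff_int2)
  thus ?thesis by (rule countable_subset) simp
qed

lemma V_eq:
  assumes "u \<noteq> 0"
  shows "V l u = Phi l \<bar>u\<bar> - Phi (pi/2) \<bar>u\<bar>"
proof -
  have a: "\<bar>u\<bar> > 0" using assms by simp
  have "(LBINT s=l..pi/2. Vintegrand u s) = (LBINT s=l..pi/2. -2 * phi \<bar>u\<bar> s)"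
    by (rule interval_integral_discrete_difference[OF countable_sin0])
       (auto simp: integrand_eq assms)
  also have "\<dots> = -2 * (LBINT s=l..pi/2. phi \<bar>u\<bar> s)"
    by (simp only: interval_lebesgue_integral_mult_right)
  finally have 1: "V l u = - (LBINT s=l..pi/2. phi \<bar>u\<bar> s)"
    by (simp add: V_def)
  have "Phi l \<bar>u\<bar> + (LBINT s=l..pi/2. phi \<bar>u\<bar> s) = Phi (pi/2) \<bar>u\<bar>"
    unfolding Phi_def
    by (rule interval_integral_sum)
      (use phi_integrable[OF a, of "min 0 (min l (pi/2))" "max 0 (max l (pi/2))"] in simp)
  with 1 show ?thesis by simp
qed

lemma DERIV_Phi:
  assumes "a > 0"
  shows "DERIV (\<lambda>l. Phi l a) x :> phi a x"
proof -
  have "((\<lambda>l. Phi l a) has_vector_derivative phi a x) (at x within {min x 0 - 1 .. max x 0 + 1})"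
    unfolding Phi_def
    by (rule interval_integral_FTC2[of "min x 0 - 1" 0 "max x 0 + 1" "phi a" x]) (auto intro: continuous_on_subset[OF phi_cont[OF assms]])
  moreover have "at x within {min x 0 - 1 .. max x 0 + 1} = at x"
    by (rule at_within_interior) auto
  ultimately show ?thesis by (simp add: has_real_derivative_iff_has_vector_derivative)
qed



lemma DERIV_Phi_chain:
  assumes "a > 0" "(g has_real_derivative g') (at x)"
  shows "((\<lambda>x. Phi (g x) a) has_real_derivative phi a (g x) * g') (at x)"
  using DERIV_chain2[OF DERIV_Phi[OF assms(1)] assms(2)] .

lemma Phi_0 [simp]: "Phi 0 a = 0" by (simp add: Phi_def)

lemma Phi_minus:
  assumes a: "a > 0" shows "Phi (-l) a = - Phi l a"
proof -
  have "\<forall>x. DERIV (\<lambda>l. Phi (-l) a + Phi l a) x :> 0"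
  proof
    fix x
    have "DERIV (\<lambda>l. Phi (-l) a + Phi l a) x :> phi a (-x) * (-1) + phi a x"
      by (intro DERIV_add DERIV_Phi_chain DERIV_Phi a derivative_eq_intros) auto
    thus "DERIV (\<lambda>l. Phi (-l) a + Phi l a) x :> 0" by (simp add: phi_minus)
  qed
  from DERIV_isconst_all[OF this, of l 0] show ?thesis by simp
qed

lemma Phi_pi_minus:
  assumes a: "a > 0" shows "Phi (pi - l) a = Phi pi a - Phi l a"
proof -
  have "\<forall>x. DERIV (\<lambda>l. Phi (pi - l) a + Phi l a) x :> 0"
  proof
    fix x
    have "DERIV (\<lambda>l. Phi (pi - l) a + Phi l a) x :> phi a (pi - x) * (-1) + phi a x"
      by (intro DERIV_add DERIV_Phi_chain DERIV_Phi a derivative_eq_intros) auto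
    thus "DERIV (\<lambda>l. Phi (pi - l) a + Phi l a) x :> 0" by (simp add: phi_pi_minus)
  qed
  from DERIV_isconst_all[OF this, of l 0] show ?thesis by simp
qed

lemma Phi_plus_pi:
  assumes a: "a > 0" shows "Phi (l + pi) a = Phi l a + Phi pi a"
proof -
  have "\<forall>x. DERIV (\<lambda>l. Phi (l + pi) a - Phi l a) x :> 0"
  proof
    fix x
    have "DERIV (\<lambda>l. Phi (l + pi) a - Phi l a) x :> phi a (x + pi) * 1 - phi a x"
      by (intro DERIV_diff DERIV_Phi_chain DERIV_Phi a derivative_eq_intros) auto
    thus "DERIV (\<lambda>l. Phi (l + pi) a - Phi l a) x :> 0" by (simp add: phi_plus_pi)
  qed
  from DERIV_isconst_all[OF this, of l 0] show ?thesis by simp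
qed

lemma Phi_pi: assumes a: "a > 0" shows "Phi pi a = 2 * Phi (pi/2) a"
  using Phi_pi_minus[OF a, of "pi/2"] by simp

lemma Phi_plus_kpi:
  assumes a: "a > 0" shows "Phi (l + of_int k * pi) a = Phi l a + 2 * of_int k * Phi (pi/2) a"
proof (induction k rule: int_induct[where k=0])
  case base then show ?case by simp
next
  case (step1 i)
  have "Phi (l + of_int (i+1) * pi) a = Phi ((l + of_int i * pi) + pi) a"
    by (simp add: algebra_simps)
  also have "\<dots> = Phi (l + of_int i * pi) a + Phi pi a" by (rule Phi_plus_pi[OF a])
  finally show ?case using step1 Phi_pi[OF a] by (simp add: algebra_simps)
next
  case (step2 i)
  have "Phi (l + of_int i * pi) a = Phi ((l + of_int (i - 1) * pi) + pi) a"
    by (simp add: algebra_simps)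
  also have "\<dots> = Phi (l + of_int (i - 1) * pi) a + Phi pi a" by (rule Phi_plus_pi[OF a])
  finally show ?case using step2 Phi_pi[OF a] by (simp add: algebra_simps)
qed

lemma V_props:
  assumes "u \<noteq> 0"
  shows "V l u = V l (- u)
        \<and> V (pi - l) u = - V l u
        \<and> V l u + V (- l) u = 2 * V 0 u
        \<and> (\<forall>k::int. V (l + of_int k * pi) u = V l u - 2 * of_int k * V 0 u)"
proof -
  have a: "\<bar>u\<bar> > 0" using assms by simp
  have mu: "- u \<noteq> 0" using assms by simp
  have e1: "\<And>l. V l u = Phi l \<bar>u\<bar> - Phi (pi/2) \<bar>u\<bar>" using V_eq[OF assms] by simp
  have e2: "\<And>l. V l (-u) = Phi l \<bar>u\<bar> - Phi (pi/2) \<bar>u\<bar>" using V_eq[OF mu] by simp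
  show ?thesis
    unfolding e1 e2
    using Phi_pi_minus[OF a, of l] Phi_pi[OF a] Phi_minus[OF a, of l]
      Phi_plus_kpi[OF a, of l]
    by (simp add: algebra_simps)
qed



lemma Phi_subst:
  assumes a: "a > 0"
  shows "Phi l a = integral {0..1} (\<lambda>t. l * phi a (l * t))"
proof -
  have "(LBINT t=(0::real)..(1::real). l *\<^sub>R phi a (l * t)) = (LBINT y=l*(0::real)..l*(1::real). phi a y)"
    by (rule interval_integral_substitution_finite[where g="\<lambda>t. l * t" and g'="\<lambda>_. l"])
       (auto intro!: derivative_eq_intros continuous_intros continuous_on_subset[OF phi_cont[OF a]])
  hence "Phi l a = (LBINT t=(0::real)..(1::real). l * phi a (l * t))"
    by (simp add: Phi_def)
  also have "\<dots> = integral {0..1} (\<lambda>t. l * phi a (l * t))"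
    by (rule interval_integral_eq_integral)
       (auto intro!: borel_integrable_atLeastAtMost' continuous_intros
          continuous_on_compose2[OF phi_cont[OF a]])
  finally show ?thesis .
qed

lemma Phi_cont: "continuous_on (UNIV \<times> {0<..}) (\<lambda>p. Phi (fst p) (snd p))"
proof -
  have "continuous_on (UNIV \<times> {0<..}) (\<lambda>p. integral (cbox 0 1) (\<lambda>t. fst p * phi (snd p) (fst p * t)))"
  proof (rule integral_continuous_on_param)
    show "continuous_on ((UNIV \<times> {0<..}) \<times> cbox 0 1)
       (\<lambda>(p, t). fst p * phi (snd p) (fst p * t))"
    proof -
      have "continuous_on ((UNIV \<times> {0<..}) \<times> cbox 0 1)
         (\<lambda>x. (\<lambda>(a,s). phi a s) (snd (fst x), fst (fst x) * snd x))"
        by (rule continuous_on_compose2[OF phi_cont2]) (auto intro!: continuous_intros)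
      thus ?thesis unfolding split_beta by (auto intro!: continuous_intros)
    qed
  qed
  thus ?thesis
    by (rule continuous_on_eq) (auto simp: Phi_subst)
qed



lemma Phi_integral:
  assumes "a > 0" "0 \<le> l"
  shows "Phi l a = integral {0..l} (phi a)"
  unfolding Phi_def
  by (rule interval_integral_eq_integral)
     (use assms in \<open>auto intro!: borel_integrable_atLeastAtMost' phi_cont continuous_on_subset[OF phi_cont]\<close>)

lemma sin_le_sin_l1:
  assumes "0 \<le> t" "t \<le> l1" "l1 \<le> pi/2"
  shows "sin t \<le> sin l1" "0 \<le> sin t"
  using assms sin_monotone_2pi_le[of t l1] by (auto intro!: sin_ge_zero)

lemma DERIV_Phi_small:
  assumes l1: "0 \<le> l1" "l1 \<le> pi/2" and a0: "sin l1 < a0"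
  shows "\<exists>D. DERIV (\<lambda>a. Phi l1 a) a0 :> D"
proof -
  define U where "U = {sin l1 <..}"
  have U0: "\<And>a. a \<in> U \<Longrightarrow> a > 0" using sin_le_sin_l1[OF order_refl l1] by (auto simp: U_def)
  have sinlt: "\<And>a t. a \<in> U \<Longrightarrow> t \<in> {0..l1} \<Longrightarrow> 0 \<le> sin t \<and> sin t < a"
    using sin_le_sin_l1 l1 by (fastforce simp: U_def)
  define f where "f a t = arccos (sin t / a)" for a t
  define fx where "fx a t = inverse (- sqrt (1 - (sin t / a)\<^sup>2)) * (- sin t / a\<^sup>2)" for a t
  have "((\<lambda>a. integral (cbox 0 l1) (f a)) has_field_derivative integral (cbox 0 l1) (fx a0)) (at a0 within U)"
  proof (rule leibniz_rule_field_derivative)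
    fix a t assume a: "a \<in> U" and t: "t \<in> cbox 0 l1"
    have st: "0 \<le> sin t" "sin t < a" "a > 0" using sinlt[OF a] t U0[OF a] by auto
    hence "sin t / a < 1" "-1 < sin t / a" by (auto simp: divide_simps)
    then show "((\<lambda>a. f a t) has_field_derivative fx a t) (at a within U)"
      unfolding f_def fx_def using st
      by (auto intro!: derivative_eq_intros simp: power2_eq_square field_simps)
  next
    fix a assume a: "a \<in> U"
    show "f a integrable_on cbox 0 l1"
      unfolding f_def using sinlt[OF a] U0[OF a]
      by (intro integrable_continuous continuous_intros) (fastforce simp: divide_simps)+
  next
    show "continuous_on (U \<times> cbox 0 l1) (\<lambda>(x, t). fx x t)"
    proof -
      have H: "(sin t / a)\<^sup>2 \<noteq> 1" if "a \<in> U" "0 \<le> t" "t \<le> l1" for a t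
      proof -
        have "0 \<le> sin t" "sin t < a" "a > 0" using sinlt U0 that by auto
        hence "\<bar>sin t / a\<bar> < 1" by (simp add: divide_simps)
        hence "(sin t / a)\<^sup>2 < 1" by (simp add: abs_square_less_1)
        thus ?thesis by simp
      qed
      have H0: "0 \<notin> U" using U0 by force
      show ?thesis
        unfolding fx_def split_beta
        by (intro continuous_intros) (auto simp: H H0)
    qed
  qed (use a0 in \<open>auto simp: U_def\<close>)
  moreover have "at a0 within U = at a0" using a0 by (intro at_within_open) (auto simp: U_def)
  ultimately have d: "((\<lambda>a. integral (cbox 0 l1) (f a)) has_field_derivative integral (cbox 0 l1) (fx a0)) (at a0)"
    by simp
  have "((\<lambda>a. Phi l1 a) has_field_derivative integral (cbox 0 l1) (fx a0)) (at a0)"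
  proof (rule has_field_derivative_transform_within_open[OF d])
    show "open U" "a0 \<in> U" using a0 by (auto simp: U_def)
    fix a assume a: "a \<in> U"
    have "Phi l1 a = integral {0..l1} (phi a)" using Phi_integral U0[OF a] l1 by simp
    also have "\<dots> = integral {0..l1} (f a)"
    proof (rule integral_cong)
      fix t assume t: "t \<in> {0..l1}"
      have "0 \<le> sin t" "sin t < a" "a > 0" using sinlt[OF a t] U0[OF a] by auto
      thus "phi a t = f a t" by (simp add: phi_def f_def)
    qed
    finally show "integral (cbox 0 l1) (f a) = Phi l1 a" by simp
  qed
  thus ?thesis by blast
qed



lemma Phi_large_l1:
  assumes l1: "0 \<le> l1" "l1 \<le> pi/2" and a: "0 < a" "a < sin l1"
  shows "Phi l1 a = Phi (pi/2) a"
proof -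
  have "Phi l1 a + (LBINT s=l1..pi/2. phi a s) = Phi (pi/2) a"
    unfolding Phi_def
    by (rule interval_integral_sum)
      (use phi_integrable[OF a(1), of "min 0 (min l1 (pi/2))" "max 0 (max l1 (pi/2))"] in simp)
  moreover have "(LBINT s=l1..pi/2. phi a s) = (LBINT s=l1..pi/2. 0)"
  proof (rule interval_integral_cong)
    fix x assume "x \<in> einterval (min (ereal l1) (ereal (pi / 2))) (max (ereal l1) (ereal (pi / 2)))"
    hence x: "l1 < x" "x < pi/2" using l1 by (auto simp: einterval_iff min_def max_def)
    have "sin l1 \<le> sin x" using x l1 by (intro sin_monotone_2pi_le) auto
    hence "a < sin x" using a by simp
    thus "phi a x = 0" using a by (simp add: phi_def)
  qed
  ultimately show ?thesis by simp
qed



definition hR :: "real \<Rightarrow> real \<Rightarrow> real" where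
  "hR a t = (pi/2 - t) * cos t * (a / sqrt (1 - (a * sin t)\<^sup>2))"

lemma sq_lt1: fixes a :: real and t :: real assumes "0 < a" "a < 1" shows "(a * sin t)\<^sup>2 < 1"
proof -
  have "\<bar>a * sin t\<bar> \<le> a" using assms abs_sin_le_one[of t]
    by (simp add: abs_mult mult_left_le)
  hence "\<bar>a * sin t\<bar> < 1" using assms by simp
  thus ?thesis by (simp add: abs_square_less_1)
qed

lemma Phi_R:
  assumes a: "0 < a" "a < 1"
  shows "Phi (pi/2) a = integral {0..pi/2} (hR a)"
proof -
  define g where "g t = arcsin (a * sin t)" for t
  define g' where "g' t = inverse (sqrt (1 - (a * sin t)\<^sup>2)) * (a * cos t)" for t
  have bnd: "-1 < a * sin t" "a * sin t < 1" for t
  proof -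
    have "\<bar>a * sin t\<bar> < 1" using sq_lt1[OF a, of t] by (simp add: abs_square_less_1)
    thus "-1 < a * sin t" "a * sin t < 1" by (simp_all add: abs_less_iff)
  qed
  have as: "0 < arcsin a" "arcsin a < pi/2" using a arcsin_less_mono[of 0 a] arcsin_less_mono[of a 1]
    by auto
  have "Phi (arcsin a) a + (LBINT s=arcsin a..pi/2. phi a s) = Phi (pi/2) a"
    unfolding Phi_def
    by (rule interval_integral_sum)
      (use phi_integrable[OF a(1), of "min 0 (min (arcsin a) (pi/2))" "max 0 (max (arcsin a) (pi/2))"] in simp)
  moreover have "(LBINT s=arcsin a..pi/2. phi a s) = (LBINT s=arcsin a..pi/2. 0)"
  proof (rule interval_integral_cong)
    fix x assume "x \<in> einterval (min (ereal (arcsin a)) (ereal (pi / 2))) (max (ereal (arcsin a)) (ereal (pi / 2)))"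
    hence x: "arcsin a < x" "x < pi/2" using as by (auto simp: einterval_iff min_def max_def)
    have "sin (arcsin a) \<le> sin x" using x as by (intro sin_monotone_2pi_le) auto
    hence "a \<le> sin x" using a by simp
    thus "phi a x = 0" using a by (simp add: phi_def)
  qed
  ultimately have 1: "Phi (pi/2) a = Phi (arcsin a) a" by simp
  have 2: "(LBINT t=(0::real)..pi/2. g' t *\<^sub>R phi a (g t)) = (LBINT y=g 0..g (pi/2). phi a y)"
  proof (rule interval_integral_substitution_finite)
    show "0 \<le> pi/2" by simp
    fix x assume "0 \<le> x" "x \<le> pi/2"
    show "(g has_real_derivative g' x) (at x within {0..pi/2})"
    proof -
      have "((\<lambda>x. a * sin x) has_real_derivative a * cos x) (at x within {0..pi/2})"
        by (auto intro!: derivative_eq_intros)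
      from DERIV_chain2[OF DERIV_arcsin[OF bnd[of x]] this]
      show ?thesis unfolding g_def g'_def .
    qed
  next
    show "continuous_on (g ` {0..pi/2}) (phi a)"
      by (rule continuous_on_subset[OF phi_cont[OF a(1)]]) simp
    have "sqrt (1 - (a * sin t)\<^sup>2) \<noteq> 0" for t using sq_lt1[OF a, of t] by simp
    then show "continuous_on {0..pi/2} g'"
      unfolding g'_def by (intro continuous_intros) auto
  qed
  have g0: "g 0 = 0" "g (pi/2) = arcsin a" by (simp_all add: g_def)
  have 3: "(LBINT t=(0::real)..pi/2. g' t *\<^sub>R phi a (g t)) = (LBINT t=(0::real)..pi/2. hR a t)"
  proof (rule interval_integral_cong)
    fix t assume "t \<in> einterval (min (ereal 0) (ereal (pi / 2))) (max (ereal 0) (ereal (pi / 2)))"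
    hence t: "0 < t" "t < pi/2" by (auto simp: einterval_iff min_def max_def)
    have st: "0 \<le> sin t" "sin t \<le> 1" using t by (auto intro!: sin_ge_zero)
    have "phi a (g t) = arccos (sin t)"
      using bnd[of t] a st by (simp add: phi_def g_def abs_mult)
    also have "sin t = cos (pi/2 - t)" by (simp add: cos_diff)
    also have "arccos (cos (pi/2 - t)) = pi/2 - t" using t by (intro arccos_cos) auto
    finally have e: "phi a (g t) = pi/2 - t" .
    show "g' t *\<^sub>R phi a (g t) = hR a t"
      unfolding real_scaleR_def e hR_def g'_def divide_inverse by (simp only: ac_simps)
  qed
  have 4: "(LBINT t=(0::real)..pi/2. hR a t) = integral {0..pi/2} (hR a)"
  proof (rule interval_integral_eq_integral)
    have "sqrt (1 - (a * sin t)\<^sup>2) \<noteq> 0" for t using sq_lt1[OF a, of t] by simp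
    then show "set_integrable lborel {0..pi / 2} (hR a)"
      unfolding hR_def by (intro borel_integrable_atLeastAtMost' continuous_intros) auto
  qed simp
  show ?thesis using 1 2 3 4 g0 unfolding Phi_def by simp
qed



lemma deriv_inner:
  fixes s :: real
  assumes q: "(a * s)\<^sup>2 < 1"
  shows "((\<lambda>a. a / sqrt (1 - (a * s)\<^sup>2)) has_real_derivative
           1 / ((1 - (a * s)\<^sup>2) * sqrt (1 - (a * s)\<^sup>2))) (at a within U)"
proof -
  define q where "q = 1 - (a * s)\<^sup>2"
  have q0: "q > 0" using assms by (simp add: q_def)
  have sq: "sqrt q * sqrt q = q" using q0 by simp
  have d1: "((\<lambda>a. 1 - (a * s)\<^sup>2) has_real_derivative (-(2 * a * s * s))) (at a within U)"
    by (auto intro!: derivative_eq_intros simp: power2_eq_square)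
  have d2: "((\<lambda>a. sqrt (1 - (a * s)\<^sup>2)) has_real_derivative inverse (sqrt q) / 2 * (-(2 * a * s * s))) (at a within U)"
    using DERIV_chain2[OF DERIV_real_sqrt[OF q0[unfolded q_def]] d1] unfolding q_def .
  have d3: "((\<lambda>a. a / sqrt (1 - (a * s)\<^sup>2)) has_real_derivative
     (1 * sqrt q - a * (inverse (sqrt q) / 2 * (-(2 * a * s * s)))) / (sqrt q * sqrt q)) (at a within U)"
    using DERIV_divide[OF DERIV_ident d2] q0 unfolding q_def by simp
  have eq: "(1 * sqrt q - a * (inverse (sqrt q) / 2 * (-(2 * a * s * s)))) / (sqrt q * sqrt q) = 1 / (q * sqrt q)"
  proof -
    have "1 * sqrt q - a * (inverse (sqrt q) / 2 * (-(2 * a * s * s))) = (sqrt q * sqrt q + (a * s)\<^sup>2) / sqrt q"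
      using q0 by (simp add: field_simps power2_eq_square)
    also have "\<dots> = 1 / sqrt q"
    proof -
      have "q + (a * s)\<^sup>2 = 1" by (simp add: q_def)
      thus ?thesis unfolding sq by simp
    qed
    finally show ?thesis unfolding sq using q0 by (simp add: field_simps)
  qed
  from d3[unfolded eq] show ?thesis unfolding q_def .
qed

lemma DERIV_Phi_half:
  assumes a0: "0 < a0" "a0 < 1"
  shows "\<exists>D. DERIV (\<lambda>a. Phi (pi/2) a) a0 :> D"
proof -
  define U where "U = {0::real<..<1}"
  define fx where "fx a t = (pi/2 - t) * cos t * (1 / ((1 - (a * sin t)\<^sup>2) * sqrt (1 - (a * sin t)\<^sup>2)))" for a t
  have nz: "1 - (a * sin t)\<^sup>2 \<noteq> 0" "sqrt (1 - (a * sin t)\<^sup>2) \<noteq> 0" if "a \<in> U" for a t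
    using sq_lt1[of a t] that by (auto simp: U_def)
  have "((\<lambda>a. integral (cbox 0 (pi/2)) (hR a)) has_field_derivative integral (cbox 0 (pi/2)) (fx a0)) (at a0 within U)"
  proof (rule leibniz_rule_field_derivative)
    fix a t assume a: "a \<in> U" and t: "t \<in> cbox 0 (pi/2)"
    have "(a * sin t)\<^sup>2 < 1" using sq_lt1[of a t] a by (auto simp: U_def)
    from DERIV_cmult[OF deriv_inner[OF this], of "(pi/2 - t) * cos t"]
    show "((\<lambda>a. hR a t) has_field_derivative fx a t) (at a within U)"
      unfolding hR_def fx_def .
  next
    fix a assume a: "a \<in> U"
    show "hR a integrable_on cbox 0 (pi/2)"
      unfolding hR_def using nz[OF a]
      by (intro integrable_continuous continuous_intros) auto
  next
    show "continuous_on (U \<times> cbox 0 (pi/2)) (\<lambda>(x, t). fx x t)"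
      unfolding fx_def split_beta
      by (intro continuous_intros) (auto dest: nz)
  qed (use a0 in \<open>auto simp: U_def\<close>)
  moreover have "at a0 within U = at a0" using a0 by (intro at_within_open) (auto simp: U_def)
  ultimately have d: "((\<lambda>a. integral (cbox 0 (pi/2)) (hR a)) has_field_derivative integral (cbox 0 (pi/2)) (fx a0)) (at a0)"
    by simp
  have "((\<lambda>a. Phi (pi/2) a) has_field_derivative integral (cbox 0 (pi/2)) (fx a0)) (at a0)"
  proof (rule has_field_derivative_transform_within_open[OF d])
    show "open U" "a0 \<in> U" using a0 by (auto simp: U_def)
    fix a assume a: "a \<in> U"
    show "integral (cbox 0 (pi/2)) (hR a) = Phi (pi/2) a" using Phi_R[of a] a by (simp add: U_def)
  qed
  thus ?thesis by blast
qed



lemma DERIV_Phi_half_all: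
  assumes "0 < a0" "a0 \<noteq> 1"
  shows "\<exists>D. DERIV (\<lambda>a. Phi (pi/2) a) a0 :> D"
proof (cases "a0 < 1")
  case True thus ?thesis using DERIV_Phi_half assms by blast
next
  case False thus ?thesis using DERIV_Phi_small[of "pi/2" a0] assms by simp
qed

lemma DERIV_Phi_l1:
  assumes l1: "0 \<le> l1" "l1 \<le> pi/2" and a0: "0 < a0" "a0 \<noteq> 1" "sin l1 \<noteq> a0"
  shows "\<exists>D. DERIV (\<lambda>a. Phi l1 a) a0 :> D"
proof (cases "sin l1 < a0")
  case True thus ?thesis using DERIV_Phi_small l1 by blast
next
  case False
  hence lt: "a0 < sin l1" using a0 by simp
  have "sin l1 \<le> 1" by simp
  hence "a0 < 1" using lt by linarith
  then obtain D where D: "DERIV (\<lambda>a. Phi (pi/2) a) a0 :> D" using DERIV_Phi_half a0 by blast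
  have "DERIV (\<lambda>a. Phi l1 a) a0 :> D"
  proof (rule has_field_derivative_transform_within_open[OF D])
    show "open {0<..<sin l1}" "a0 \<in> {0<..<sin l1}" using a0 lt by auto
    fix a assume "a \<in> {0<..<sin l1}"
    thus "Phi (pi/2) a = Phi l1 a" using Phi_large_l1[OF l1, of a] by simp
  qed
  thus ?thesis by blast
qed

lemma reduce_l:
  fixes l0 :: real
  obtains k :: int and d :: real where "l0 = d + of_int k * pi" "-(pi/2) \<le> d" "d \<le> pi/2"
proof -
  define k where "k = \<lfloor>l0/pi + 1/2\<rfloor>"
  have "of_int k \<le> l0/pi + 1/2" "l0/pi + 1/2 < of_int k + 1" unfolding k_def by linarith+
  hence "of_int k * pi \<le> l0 + pi/2" "l0 + pi/2 < (of_int k + 1) * pi"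
    using pi_gt_zero by (simp_all add: field_simps)
  hence "-(pi/2) \<le> l0 - of_int k * pi" "l0 - of_int k * pi \<le> pi/2" by (simp_all add: algebra_simps)
  thus ?thesis using that[of "l0 - of_int k * pi" k] by simp
qed

lemma sin_sq_shift: "(sin (d + of_int k * pi))\<^sup>2 = (sin d)\<^sup>2"
proof -
  have s: "sin (of_int k * pi) = 0" by (auto simp: sin_zero_iff_int2)
  have c: "(cos (of_int k * pi))\<^sup>2 = 1" using sin_cos_squared_add[of "of_int k * pi"] s by simp
  show ?thesis by (simp add: sin_add s power_mult_distrib c)
qed

lemma DERIV_Phi_a:
  assumes a0: "0 < a0" "a0 \<noteq> 1" "(sin l0)\<^sup>2 \<noteq> a0\<^sup>2"
  shows "\<exists>D. DERIV (\<lambda>a. Phi l0 a) a0 :> D"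
proof -
  obtain k d where kd: "l0 = d + of_int k * pi" "-(pi/2) \<le> d" "d \<le> pi/2" by (rule reduce_l)
  define l1 where "l1 = \<bar>d\<bar>"
  have l1: "0 \<le> l1" "l1 \<le> pi/2" using kd by (auto simp: l1_def)
  have "(sin l1)\<^sup>2 = (sin l0)\<^sup>2" using kd sin_sq_shift[of d k]
    by (cases "d \<ge> 0") (auto simp: l1_def)
  moreover have "sin l1 \<ge> 0" using l1 by (intro sin_ge_zero) auto
  ultimately have "sin l1 \<noteq> a0" using a0 by auto
  then obtain D1 where D1: "DERIV (\<lambda>a. Phi l1 a) a0 :> D1" using DERIV_Phi_l1[OF l1 a0(1,2)] by blast
  obtain D2 where D2: "DERIV (\<lambda>a. Phi (pi/2) a) a0 :> D2" using DERIV_Phi_half_all a0 by blast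
  define sg where "sg = (if d \<ge> 0 then 1 else -1::real)"
  have eq: "Phi l0 a = sg * Phi l1 a + 2 * of_int k * Phi (pi/2) a" if "a > 0" for a
  proof -
    have "Phi l0 a = Phi d a + 2 * of_int k * Phi (pi/2) a" using kd Phi_plus_kpi[OF that] by simp
    moreover have "Phi d a = sg * Phi l1 a" using Phi_minus[OF that, of "-d"]
      by (auto simp: sg_def l1_def)
    ultimately show ?thesis by simp
  qed
  have "DERIV (\<lambda>a. sg * Phi l1 a + 2 * of_int k * Phi (pi/2) a) a0 :> sg * D1 + 2 * of_int k * D2"
    by (intro DERIV_add DERIV_cmult D1 D2)
  hence "DERIV (\<lambda>a. Phi l0 a) a0 :> sg * D1 + 2 * of_int k * D2"
    by (rule has_field_derivative_transform_within_open[where S="{0<..}"]) (use a0 eq in auto)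
  thus ?thesis by blast
qed



definition W :: "real \<times> real \<Rightarrow> real" where
  "W p = Phi (fst p) \<bar>snd p\<bar> - Phi (pi/2) \<bar>snd p\<bar>"

lemma V_W: "snd p \<noteq> 0 \<Longrightarrow> V (fst p) (snd p) = W p"
  by (simp add: V_eq W_def)

lemma W_cont: "continuous_on {p. snd p \<noteq> 0} W"
proof -
  have 1: "continuous_on {p::real\<times>real. snd p \<noteq> 0} (\<lambda>p. (\<lambda>p. Phi (fst p) (snd p)) (fst p, \<bar>snd p\<bar>))"
    by (rule continuous_on_compose2[OF Phi_cont]) (auto intro!: continuous_intros)
  have 2: "continuous_on {p::real\<times>real. snd p \<noteq> 0} (\<lambda>p. (\<lambda>p. Phi (fst p) (snd p)) (pi/2, \<bar>snd p\<bar>))"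
    by (rule continuous_on_compose2[OF Phi_cont]) (auto intro!: continuous_intros)
  show ?thesis unfolding W_def using continuous_on_diff[OF 1 2] by simp
qed

lemma V_cont: "continuous_on {p :: real \<times> real. snd p \<noteq> 0} (\<lambda>p. V (fst p) (snd p))"
  using W_cont by (rule continuous_on_eq) (simp add: V_W)

lemma DERIV_abs_nz:
  fixes x :: real assumes "x \<noteq> 0"
  shows "(abs has_real_derivative sgn x) (at x)"
proof (cases "x > 0")
  case True
  have "((\<lambda>y. y) has_real_derivative 1) (at x)" by (rule DERIV_ident)
  from has_field_derivative_transform_within_open[OF this, of "{0<..}" abs] True
  show ?thesis by auto
next
  case False
  hence x: "x < 0" using assms by simp
  have "((\<lambda>y. - y) has_real_derivative -1) (at x)" by (auto intro!: derivative_eq_intros)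
  from has_field_derivative_transform_within_open[OF this, of "{..<0}" abs] x
  show ?thesis by auto
qed

lemma G_deriv:
  assumes a0: "0 < a0" "a0 \<noteq> 1" "(sin l0)\<^sup>2 \<noteq> a0\<^sup>2"
  shows "\<exists>G'. ((\<lambda>(a, l). Phi l a) has_derivative G') (at (a0, l0))"
proof -
  obtain D where D: "DERIV (\<lambda>a. Phi l0 a) a0 :> D" using DERIV_Phi_a[OF a0] by blast
  have "((\<lambda>(a, l). Phi l a) has_derivative (\<lambda>(ta, tl). (*) D ta + blinfun_mult_right (phi a0 l0) tl))
          (at (a0, l0) within {0<..} \<times> UNIV)"
  proof (rule has_derivative_partialsI)
    show "((\<lambda>a. Phi l0 a) has_derivative (*) D) (at a0 within {0<..})"
      using D by (simp add: has_field_derivative_def has_derivative_at_withinI)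
    fix a l assume a: "a \<in> {0::real<..}" and "l \<in> (UNIV :: real set)"
    show "((\<lambda>l. Phi l a) has_derivative blinfun_apply (blinfun_mult_right (phi a l))) (at l within UNIV)"
      using DERIV_Phi[of a l] a by (simp add: has_field_derivative_eq_has_derivative_blinfun)
  next
    have "continuous_on ({0<..} \<times> UNIV) (\<lambda>(a, l). blinfun_mult_right (phi a l))"
      using phi_cont2 unfolding split_beta by (intro continuous_intros) auto
    thus "continuous (at (a0, l0) within {0<..} \<times> UNIV) (\<lambda>(a, l). blinfun_mult_right (phi a l))"
      using a0 continuous_on_eq_continuous_within by blast
  qed auto
  moreover have "at (a0, l0) within {0<..} \<times> UNIV = at (a0, l0)"
    using a0 by (intro at_within_open) (auto intro: open_Times)
  ultimately show ?thesis by auto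
qed



lemma W_diff:
  assumes p: "snd p \<noteq> 0" "(snd p)\<^sup>2 \<noteq> 1" "(sin (fst p))\<^sup>2 \<noteq> (snd p)\<^sup>2"
  shows "(\<lambda>q. V (fst q) (snd q)) differentiable (at p)"
proof -
  define a0 where "a0 = \<bar>snd p\<bar>"
  define l0 where "l0 = fst p"
  have sq: "a0\<^sup>2 = (snd p)\<^sup>2" by (simp add: a0_def)
  have a0: "0 < a0" "a0 \<noteq> 1" "(sin l0)\<^sup>2 \<noteq> a0\<^sup>2" using p sq by (auto simp: a0_def l0_def abs_eq_iff power2_eq_1_iff)
  obtain G' where G': "((\<lambda>(a, l). Phi l a) has_derivative G') (at (a0, l0))" using G_deriv[OF a0] by blast
  obtain D where D: "DERIV (\<lambda>a. Phi (pi/2) a) a0 :> D" using DERIV_Phi_half_all a0 by blast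
  have hA: "((\<lambda>q. \<bar>snd q\<bar>) has_derivative (\<lambda>h. sgn (snd p) * snd h)) (at p)"
  proof -
    have "(abs has_derivative (*) (sgn (snd p))) (at (snd p))"
      using DERIV_abs_nz[OF p(1)] by (simp add: has_field_derivative_def)
    from diff_chain_at[OF has_derivative_snd[OF has_derivative_ident] this]
    show ?thesis by (simp add: o_def)
  qed
  have hM: "((\<lambda>q. (\<bar>snd q\<bar>, fst q)) has_derivative (\<lambda>h. (sgn (snd p) * snd h, fst h))) (at p)"
    by (intro has_derivative_Pair hA has_derivative_fst[OF has_derivative_ident])
  have "(((\<lambda>(a, l). Phi l a) \<circ> (\<lambda>q. (\<bar>snd q\<bar>, fst q))) has_derivative
          (G' \<circ> (\<lambda>h. (sgn (snd p) * snd h, fst h)))) (at p)"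
    by (rule diff_chain_at[OF hM]) (use G' in \<open>simp add: a0_def l0_def\<close>)
  hence 1: "((\<lambda>q. Phi (fst q) \<bar>snd q\<bar>) has_derivative
          (G' \<circ> (\<lambda>h. (sgn (snd p) * snd h, fst h)))) (at p)"
    by (simp add: o_def)
  have "((\<lambda>a. Phi (pi/2) a) has_derivative (*) D) (at \<bar>snd p\<bar>)"
    using D by (simp add: has_field_derivative_def a0_def)
  from diff_chain_at[OF hA this]
  have 2: "((\<lambda>q. Phi (pi/2) \<bar>snd q\<bar>) has_derivative ((*) D \<circ> (\<lambda>h. sgn (snd p) * snd h))) (at p)"
    by (simp add: o_def)
  define W' where "W' = (\<lambda>h. (G' \<circ> (\<lambda>h. (sgn (snd p) * snd h, fst h))) h - ((*) D \<circ> (\<lambda>h. sgn (snd p) * snd h)) h)"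
  have "(W has_derivative W') (at p)"
    unfolding W_def W'_def by (rule has_derivative_diff[OF 1 2])
  hence "((\<lambda>q. V (fst q) (snd q)) has_derivative W') (at p)"
  proof (rule has_derivative_transform_within_open)
    show "open {q::real\<times>real. snd q \<noteq> 0}" by (intro open_Collect_neq continuous_intros)
    show "p \<in> {q. snd q \<noteq> 0}" using p by simp
    fix q :: "real \<times> real" assume "q \<in> {q. snd q \<noteq> 0}"
    thus "W q = V (fst q) (snd q)" by (simp add: V_W)
  qed
  thus ?thesis unfolding differentiable_def by blast
qed

definition NN :: "(real \<times> real) set" where
  "NN = {p. snd p * ((snd p)\<^sup>2 - 1) * ((sin (fst p))\<^sup>2 - (snd p)\<^sup>2) = 0}"

lemma NN_sets: "NN \<in> sets (lborel :: (real \<times> real) measure)"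
proof -
  have "closed NN" unfolding NN_def by (intro closed_Collect_eq continuous_intros)
  thus ?thesis by (simp add: borel_closed)
qed

lemma NN_null: "NN \<in> null_sets (lborel :: (real \<times> real) measure)"
proof -
  have sets: "NN \<in> sets (lborel \<Otimes>\<^sub>M lborel :: (real \<times> real) measure)"
    unfolding lborel_prod by (rule NN_sets)
  have sec: "emeasure lborel (Pair x -` NN) = 0" for x :: real
  proof -
    have "Pair x -` NN \<subseteq> {0, 1, -1, sin x, - sin x}"
    proof
      fix y assume "y \<in> Pair x -` NN"
      hence "y * (y\<^sup>2 - 1) * ((sin x)\<^sup>2 - y\<^sup>2) = 0" by (simp add: NN_def)
      hence "y = 0 \<or> y\<^sup>2 = 1 \<or> (sin x)\<^sup>2 = y\<^sup>2" by auto
      thus "y \<in> {0, 1, -1, sin x, - sin x}"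
        by (auto simp: power2_eq_1_iff power2_eq_iff)
    qed
    hence "countable (Pair x -` NN)" by (rule countable_subset) simp
    thus ?thesis by (rule emeasure_lborel_countable)
  qed
  have "emeasure (lborel \<Otimes>\<^sub>M lborel :: (real \<times> real) measure) NN = (\<integral>\<^sup>+x. emeasure lborel (Pair x -` NN) \<partial>lborel)"
    by (rule sigma_finite_measure.emeasure_pair_measure_alt[OF sigma_finite_lborel sets])
  also have "\<dots> = 0" by (simp add: sec)
  finally show ?thesis using NN_sets by (simp add: lborel_prod null_sets_def)
qed

lemma V_AE: "AE p in (lborel :: (real \<times> real) measure).
          snd p \<noteq> 0 \<longrightarrow> (\<lambda>q. V (fst q) (snd q)) differentiable (at p)"
proof (rule AE_I'[OF NN_null])
  show "{p \<in> space lborel. \<not> (snd p \<noteq> 0 \<longrightarrow> (\<lambda>q. V (fst q) (snd q)) differentiable at p)} \<subseteq> NN"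
  proof
    fix p assume "p \<in> {p \<in> space lborel. \<not> (snd p \<noteq> 0 \<longrightarrow> (\<lambda>q. V (fst q) (snd q)) differentiable at p)}"
    hence u: "snd p \<noteq> 0" and nd: "\<not> (\<lambda>q. V (fst q) (snd q)) differentiable at p" by auto
    show "p \<in> NN"
    proof (rule ccontr)
      assume "p \<notin> NN"
      hence "(snd p)\<^sup>2 \<noteq> 1" "(sin (fst p))\<^sup>2 \<noteq> (snd p)\<^sup>2" by (auto simp: NN_def)
      with W_diff[of p] u nd show False by simp
    qed
  qed
qed


theorem lemma7:
  shows "continuous_on {p :: real \<times> real. snd p \<noteq> 0} (\<lambda>p. V (fst p) (snd p))
    \<and> (AE p in (lborel :: (real \<times> real) measure).
          snd p \<noteq> 0 \<longrightarrow> (\<lambda>q. V (fst q) (snd q)) differentiable (at p))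
    \<and> (\<forall>l u. u \<noteq> 0 \<longrightarrow>
          V l u = V l (- u)
        \<and> V (pi - l) u = - V l u
        \<and> V l u + V (- l) u = 2 * V 0 u
        \<and> (\<forall>k::int. V (l + of_int k * pi) u = V l u - 2 * of_int k * V 0 u))"
  using V_cont V_AE V_props by blast

end
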